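(* If $D_{15,14,6}$ is unsatisfiable, i.e., there is no packing $14$-coloring of $D_{15}$ that assigns color $6$ to the vertex $(0,0)$, then $\chi_\rho(\mathbb{Z}^2) \geq 15$.
   Context: $\mathbb{Z}^2$ denotes the graph with vertex set $\mathbb{Z}\times\mathbb{Z}$ and edges between points at $\ell_1$ distance $1$; its graph distance $d$ is the $\ell_1$ distance. A packing $k$-coloring of a graph $G=(V,E)$ is a function $f: V\to\{1,\ldots,k\}$ such that for any distinct $u,v\in V$ and any color $c$, $f(u)=f(v)=c$ implies $d(u,v)>c$. The packing chromatic number $\chi_\rho(G)$ is the least $k$ for which $G$ admits a packing $k$-coloring. For $r\ge 0$, $D_r$ is the subgraph of $\mathbb{Z}^2$ induced by $\{u \in \mathbb{Z}^2 : d(u,(0,0)) \le r\}$, with distances measured as $\ell_1$ distances. $D_{r,k,c}$ denotes the problem of deciding whether $D_r$ admits a packing $k$-coloring assigning color $c$ to $(0,0)$; it is called unsatisfiable if no such coloring exists. *)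

theory Defs
  imports Main "HOL-Library.Extended_Nat"
begin

text \<open>Graph distance of the grid graph Z^2, i.e. the l1 distance.\<close>
definition dist1 :: "int \<times> int \<Rightarrow> int \<times> int \<Rightarrow> int" where
  "dist1 u v = \<bar>fst u - fst v\<bar> + \<bar>snd u - snd v\<bar>"

definition packing_coloring :: "(int \<times> int) set \<Rightarrow> nat \<Rightarrow> (int \<times> int \<Rightarrow> nat) \<Rightarrow> bool" where
  "packing_coloring V k f \<longleftrightarrow>
     (\<forall>v\<in>V. f v \<in> {1..k}) \<and>
     (\<forall>u\<in>V. \<forall>v\<in>V. u \<noteq> v \<and> f u = f v \<longrightarrow> dist1 u v > int (f u))"

definition diamond :: "nat \<Rightarrow> (int \<times> int) set" where
  "diamond r = {u. dist1 u (0,0) \<le> int r}"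

definition D_sat :: "nat \<Rightarrow> nat \<Rightarrow> nat \<Rightarrow> bool" where
  "D_sat r k c \<longleftrightarrow> (\<exists>f. packing_coloring (diamond r) k f \<and> f (0,0) = c)"

text \<open>Packing chromatic number of Z^2 (infinity if no packing coloring exists).\<close>
definition chi_rho_Z2 :: enat where
  "chi_rho_Z2 = Inf {enat k | k. \<exists>f. packing_coloring UNIV k f}"

end

theory Submission
  imports Defs
begin

lemma pc_mono: "packing_coloring V k f \<Longrightarrow> k \<le> 14 \<Longrightarrow> W \<subseteq> V \<Longrightarrow> packing_coloring W 14 f"
  unfolding packing_coloring_def by (meson atLeastAtMost_iff le_trans subsetD)

lemma key:
  assumes pc: "packing_coloring UNIV k f" and k: "k \<le> 14"
  shows "D_sat 15 14 6"
proof (cases "\<exists>w. f w = 6")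
  case True
  then obtain w where w: "f w = 6" by blast
  define g where "g = (\<lambda>x. f (fst x + fst w, snd x + snd w))"
  define t where "t = (\<lambda>x::int\<times>int. (fst x + fst w, snd x + snd w))"
  have gt: "g = f \<circ> t" by (simp add: g_def t_def fun_eq_iff)
  have dt: "dist1 (t u) (t v) = dist1 u v" for u v by (simp add: t_def dist1_def)
  have it: "t u = t v \<Longrightarrow> u = v" for u v by (simp add: t_def prod_eq_iff)
  have "packing_coloring UNIV k g"
    using pc unfolding packing_coloring_def gt
    by (metis UNIV_I comp_apply dt it)
  hence "packing_coloring (diamond 15) 14 g" using k pc_mono by blast
  moreover have "g (0,0) = 6" using w by (simp add: g_def)
  ultimately show ?thesis unfolding D_sat_def by blast
next
  case False
  define g where "g = f((0,0) := 6)"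
  have F: "f w \<noteq> 6" for w using False by blast
  have P1: "\<forall>v. f v \<in> {1..k}" and
       P2: "\<forall>u v. u \<noteq> v \<and> f u = f v \<longrightarrow> dist1 u v > int (f u)"
    using pc unfolding packing_coloring_def by blast+
  have "packing_coloring UNIV 14 g"
    unfolding packing_coloring_def
  proof (intro conjI ballI impI)
    fix v :: "int \<times> int"
    show "g v \<in> {1..14}"
    proof (cases "v = (0,0)")
      case False
      have "f v \<in> {1..k}" using P1 by blast
      thus ?thesis using k False by (simp add: g_def)
    qed (simp add: g_def)
  next
    fix u v :: "int \<times> int"
    assume a: "u \<noteq> v \<and> g u = g v"
    show "dist1 u v > int (g u)"
    proof (cases "u = (0,0) \<or> v = (0,0)")
      case True
      then show ?thesis using a F unfolding g_def
        by (metis fun_upd_apply)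
    next
      case False
      then show ?thesis using a P2 unfolding g_def by (metis fun_upd_apply)
    qed
  qed
  hence "packing_coloring (diamond 15) 14 g" using pc_mono by blast
  moreover have "g (0,0) = 6" by (simp add: g_def)
  ultimately show ?thesis unfolding D_sat_def by blast
qed

theorem lemma2:
  assumes "\<not> D_sat 15 14 6"
  shows "chi_rho_Z2 \<ge> 15"
  unfolding chi_rho_Z2_def
proof (rule Inf_greatest)
  fix x assume "x \<in> {enat k | k. \<exists>f. packing_coloring UNIV k f}"
  then obtain k f where x: "x = enat k" and pc: "packing_coloring UNIV k f" by blast
  have "\<not> k \<le> 14" using key[OF pc] assms by blast
  thus "15 \<le> x" using x by (simp add: numeral_eq_enat)
qed

end
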